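(* Let $\mu_1,\nu_1,\mu_2,\nu_2$ be distributions on $\mathbb{C}[x]$. Then, as formal power series, $$\eta_{\mu_1\rhd_{\nu_2}\mu_2}(z)=\frac{\eta_{\mu_2}(z)}{\eta_{\nu_2}(z)}\,\eta_{\mu_1}(\eta_{\nu_2}(z)),\qquad \eta_{\nu_1\rhd\nu_2}(z)=\eta_{\nu_1}(\eta_{\nu_2}(z)).$$ Here $\frac{\eta_{\mu_1}(\eta_{\nu_2}(z))}{\eta_{\nu_2}(z)}$ means $h(\eta_{\nu_2}(z))$ with $h(w)=\eta_{\mu_1}(w)/w$. In particular, if $\eta_{\nu_2}=0$ (for instance if $\nu_2$ corresponds to the normalized Haar measure on the unit circle), the first relation reads $\eta_{\mu_1\rhd_{\nu_2}\mu_2}(z)=\mu_1(x)\,\eta_{\mu_2}(z)$. If all distributions arise from probability measures on the unit circle $\mathbb{T}$, both relations hold as identities of analytic functions on $|z|<1$.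
   Context: A distribution is a unital linear functional $\mu$ on $\mathbb{C}[x]$. Its Cauchy transform is the formal series $G_\mu(z)=\sum_{n\ge0}\mu(x^n)z^{-n-1}$. Define $\eta_\mu(z)=1-\frac{z}{G_\mu(1/z)}$; equivalently $\eta_\mu=\psi_\mu/(1+\psi_\mu)$ with $\psi_\mu(z)=\sum_{n\ge1}\mu(x^n)z^n$. A probability measure $\mu$ on $\mathbb{T}$ is identified with the distribution $\mu(x^n)=\int_{\mathbb{T}}\zeta^n\,d\mu(\zeta)$; then $\eta_\mu$ is analytic on the unit disc. An algebraic probability space $(\mathcal{A},\varphi,\psi)$ is a unital complex algebra with two unital linear functionals. For $X\in\mathcal{A}$, $\mu_X(x^n)=\varphi(X^n)$ and $\nu_X(x^n)=\psi(X^n)$. Subalgebras $\{\mathcal{A}_i\}_{i\in I}$ (not containing the unit, with $I$ linearly ordered) are c-monotone independent if for all $X_k\in\mathcal{A}_{i_k}$: - (1) $\varphi(X_1\cdots X_n)=\varphi(X_1)\varphi(X_2\cdots X_n)$ if $i_1>i_2$; - (2) $\varphi(X_1\cdots X_n)=\varphi(X_1\cdots X_{n-1})\varphi(X_n)$ if $i_n>i_{n-1}$; - (3) $\varphi(X_1\cdots X_n)=(\varphi(X_j)-\psi(X_j))\varphi(X_1\cdots X_{j-1})\varphi(X_{j+1}\cdots X_n)+\psi(X_j)\varphi(X_1\cdots X_{j-1}X_{j+1}\cdots X_n)$ if $2\le j\le n-1$ and $i_{j-1}<i_j>i_{j+1}$; - (4) (1)–(3) also hold with $\varphi$ replaced by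 $\psi$. Multiplicative c-monotone convolution: if $X-1$ and $Y$ are c-monotone independent (the algebra of $X-1$ first), then $(\mu_{XY},\nu_{XY})=:(\mu_X\rhd_{\nu_Y}\mu_Y,\ \nu_X\rhd\nu_Y)$. The left component depends only on $\mu_X,\mu_Y,\nu_Y$. The right component is the multiplicative monotone convolution. This defines the operations for arbitrary distributions. *)

theory Defs
  imports "HOL-Analysis.Analysis" "HOL-Computational_Algebra.Formal_Power_Series" "HOL-Probability.Probability_Measure"
begin

text \<open>A distribution (unital linear functional on C[x]) is represented by its moment
  sequence m, m n = mu(x^n), with m 0 = 1.\<close>

definition distribution :: "(nat \<Rightarrow> complex) \<Rightarrow> bool" where
  "distribution m \<longleftrightarrow> m 0 = 1"

definition psi_fps :: "(nat \<Rightarrow> complex) \<Rightarrow> complex fps" where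
  "psi_fps m = Abs_fps (\<lambda>n. if n = 0 then 0 else m n)"

definition eta_fps :: "(nat \<Rightarrow> complex) \<Rightarrow> complex fps" where
  "eta_fps m = psi_fps m / (1 + psi_fps m)"

definition complex_algebra :: "(complex \<Rightarrow> 'a::ring_1 \<Rightarrow> 'a) \<Rightarrow> bool" where
  "complex_algebra sm \<longleftrightarrow>
     (\<forall>c x y. sm c (x + y) = sm c x + sm c y) \<and>
     (\<forall>c d x. sm (c + d) x = sm c x + sm d x) \<and>
     (\<forall>c d x. sm (c * d) x = sm c (sm d x)) \<and>
     (\<forall>x. sm 1 x = x) \<and>
     (\<forall>c x y. sm c (x * y) = sm c x * y) \<and>
     (\<forall>c x y. sm c (x * y) = x * sm c y)"

definition unital_functional :: "(complex \<Rightarrow> 'a::ring_1 \<Rightarrow> 'a) \<Rightarrow> ('a \<Rightarrow> complex) \<Rightarrow> bool" where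
  "unital_functional sm f \<longleftrightarrow>
     (\<forall>x y. f (x + y) = f x + f y) \<and> (\<forall>c x. f (sm c x) = c * f x) \<and> f 1 = 1"

definition alg_prob_space ::
  "(complex \<Rightarrow> 'a::ring_1 \<Rightarrow> 'a) \<Rightarrow> ('a \<Rightarrow> complex) \<Rightarrow> ('a \<Rightarrow> complex) \<Rightarrow> bool" where
  "alg_prob_space sm \<phi> \<psi> \<longleftrightarrow>
     complex_algebra sm \<and> unital_functional sm \<phi> \<and> unital_functional sm \<psi>"

definition nonunital_subalgebra :: "(complex \<Rightarrow> 'a::ring_1 \<Rightarrow> 'a) \<Rightarrow> 'a set \<Rightarrow> bool" where
  "nonunital_subalgebra sm S \<longleftrightarrow>
     0 \<in> S \<and> (\<forall>x\<in>S. \<forall>y\<in>S. x + y \<in> S \<and> x * y \<in> S) \<and>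
     (\<forall>c. \<forall>x\<in>S. sm c x \<in> S) \<and> 1 \<notin> S"

definition distr :: "('a::monoid_mult \<Rightarrow> complex) \<Rightarrow> 'a \<Rightarrow> nat \<Rightarrow> complex" where
  "distr f X = (\<lambda>n. f (X ^ n))"

text \<open>Rules (1)--(3) of c-monotone independence for a pair of functionals (f, g):
  f plays the role of phi and g the role of psi.  Words X_1...X_n are lists xs with
  index lists is (0-based), xs!k in A (is!k), is!k in I.\<close>
definition cmono_rules ::
  "('a::ring_1 \<Rightarrow> complex) \<Rightarrow> ('a \<Rightarrow> complex) \<Rightarrow> 'i::linorder set \<Rightarrow> ('i \<Rightarrow> 'a set) \<Rightarrow> bool" where
  "cmono_rules f g I A \<longleftrightarrow>
    (\<forall>xs is. length is = length xs \<and> set is \<subseteq> I \<and> (\<forall>k<length xs. xs ! k \<in> A (is ! k)) \<longrightarrow>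
      (let n = length xs in
        (2 \<le> n \<and> is ! 1 < is ! 0 \<longrightarrow>
            f (prod_list xs) = f (xs ! 0) * f (prod_list (drop 1 xs))) \<and>
        (2 \<le> n \<and> is ! (n - 2) < is ! (n - 1) \<longrightarrow>
            f (prod_list xs) = f (prod_list (take (n - 1) xs)) * f (xs ! (n - 1))) \<and>
        (\<forall>j. 1 \<le> j \<and> j + 2 \<le> n \<and> is ! (j - 1) < is ! j \<and> is ! (j + 1) < is ! j \<longrightarrow>
            f (prod_list xs) =
              (f (xs ! j) - g (xs ! j)) * f (prod_list (take j xs)) * f (prod_list (drop (j + 1) xs))
              + g (xs ! j) * f (prod_list (take j xs @ drop (j + 1) xs)))))"

definition c_monotone_independent ::
  "(complex \<Rightarrow> 'a::ring_1 \<Rightarrow> 'a) \<Rightarrow> ('a \<Rightarrow> complex) \<Rightarrow> ('a \<Rightarrow> complex) \<Rightarrow>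
   'i::linorder set \<Rightarrow> ('i \<Rightarrow> 'a set) \<Rightarrow> bool" where
  "c_monotone_independent sm \<phi> \<psi> I A \<longleftrightarrow>
     (\<forall>i\<in>I. nonunital_subalgebra sm (A i)) \<and>
     cmono_rules \<phi> \<psi> I A \<and> cmono_rules \<psi> \<psi> I A"

definition prob_on_circle :: "complex measure \<Rightarrow> bool" where
  "prob_on_circle M \<longleftrightarrow> prob_space M \<and> sets M = sets borel \<and> emeasure M (- sphere 0 1) = 0"

definition moments :: "complex measure \<Rightarrow> nat \<Rightarrow> complex" where
  "moments M n = (\<integral>\<zeta>. \<zeta> ^ n \<partial>M)"

definition psi_meas :: "complex measure \<Rightarrow> complex \<Rightarrow> complex" where
  "psi_meas M z = (\<integral>\<zeta>. z * \<zeta> / (1 - z * \<zeta>) \<partial>M)"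

definition eta_meas :: "complex measure \<Rightarrow> complex \<Rightarrow> complex" where
  "eta_meas M z = psi_meas M z / (1 + psi_meas M z)"

end

theory Submission
  imports Defs "HOL-Complex_Analysis.Laurent_Convergence"
begin


definition Qf :: "(nat \<Rightarrow> nat \<Rightarrow> complex) \<Rightarrow> nat \<Rightarrow> complex fps" where
  "Qf Q e = Abs_fps (\<lambda>n. if n = 0 then 0 else Q e (n - 1))"
definition Sf :: "(nat \<Rightarrow> complex) \<Rightarrow> nat \<Rightarrow> complex fps" where
  "Sf p e = Abs_fps (\<lambda>j. p (e + j))"

lemma psi_fps_nth: "fps_nth (psi_fps c) n = (if n = 0 then 0 else c n)"
  by (simp add: psi_fps_def)

lemma Qf_nth: "fps_nth (Qf Q e) n = (if n = 0 then 0 else Q e (n - 1))"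
  by (simp add: Qf_def)

lemma mult_nth_Suc0:
  fixes F G :: "complex fps"
  assumes "fps_nth F 0 = 0" "fps_nth G 0 = 0"
  shows "fps_nth (F*G) (Suc m) = (\<Sum>i=1..m. fps_nth F i * fps_nth G (Suc m - i))"
  using assms by (simp add: fps_mult_nth sum.atLeast0_atMost_Suc sum.atLeast_Suc_atMost)

lemma Qf_rec:
  assumes rec: "\<And>e m. Q e m = p e * c (Suc m) +
     (\<Sum>i=1..m. (c i - b i) * p e * Q 1 (m - i) + b i * Q (Suc e) (m - i))"
  shows "Qf Q e = fps_const (p e) * (psi_fps c + (psi_fps c - psi_fps b) * Qf Q 1) + psi_fps b * Qf Q (Suc e)"
proof (rule fps_ext)
  fix n show "fps_nth (Qf Q e) n = fps_nth (fps_const (p e) * (psi_fps c + (psi_fps c - psi_fps b) * Qf Q 1) + psi_fps b * Qf Q (Suc e)) n"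
  proof (cases n)
    case 0 then show ?thesis by (simp add: Qf_nth psi_fps_nth)
  next
    case (Suc m)
    have 1: "fps_nth ((psi_fps c - psi_fps b) * Qf Q 1) (Suc m) = (\<Sum>i=1..m. (c i - b i) * Q 1 (m - i))"
      by (subst mult_nth_Suc0) (auto simp: Qf_nth psi_fps_nth Suc_diff_le intro!: sum.cong)
    have 2: "fps_nth (psi_fps b * Qf Q (Suc e)) (Suc m) = (\<Sum>i=1..m. b i * Q (Suc e) (m - i))"
      by (subst mult_nth_Suc0) (auto simp: Qf_nth psi_fps_nth Suc_diff_le intro!: sum.cong)
    have "fps_nth (fps_const (p e) * (psi_fps c + (psi_fps c - psi_fps b) * Qf Q 1) + psi_fps b * Qf Q (Suc e)) (Suc m)
       = p e * (c (Suc m) + (\<Sum>i=1..m. (c i - b i) * Q 1 (m - i))) + (\<Sum>i=1..m. b i * Q (Suc e) (m - i))"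
      by (simp only: fps_add_nth fps_mult_left_const_nth 1 2) (simp add: psi_fps_nth)
    also have "\<dots> = Q e m"
      by (subst rec[of e m]) (simp add: sum_distrib_left ring_distribs flip: sum.distrib, rule sum.cong, simp_all add: algebra_simps)
    finally show ?thesis unfolding Suc by (simp add: Qf_nth)
  qed
qed

lemma Sf_rec: "Sf p e = fps_const (p e) + fps_X * Sf p (Suc e)"
  by (rule fps_ext) (auto simp: Sf_def fps_X_mult_nth)

lemma Sf_compose_rec:
  assumes "fps_nth B 0 = 0"
  shows "fps_compose (Sf p e) B = fps_const (p e) + B * fps_compose (Sf p (Suc e)) B"
  apply (subst Sf_rec)
  using assms by (simp add: fps_compose_add_distrib fps_compose_mult_distrib)

lemma Qf_solve:
  assumes rec: "\<And>e m. Q e m = p e * c (Suc m) +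
     (\<Sum>i=1..m. (c i - b i) * p e * Q 1 (m - i) + b i * Q (Suc e) (m - i))"
  shows "Qf Q e = (psi_fps c + (psi_fps c - psi_fps b) * Qf Q 1) * fps_compose (Sf p e) (psi_fps b)"
proof -
  define K where "K = psi_fps c + (psi_fps c - psi_fps b) * Qf Q 1"
  define B where "B = psi_fps b"
  have B0: "fps_nth B 0 = 0" by (simp add: B_def psi_fps_nth)
  define D where "D e = Qf Q e - K * fps_compose (Sf p e) B" for e
  have Drec: "D e = B * D (Suc e)" for e
  proof -
    have "D e = fps_const (p e) * K + B * Qf Q (Suc e) - K * (fps_const (p e) + B * fps_compose (Sf p (Suc e)) B)"
      unfolding D_def using Qf_rec[OF rec, of e] Sf_compose_rec[OF B0, of p e] by (simp add: K_def B_def)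
    also have "\<dots> = B * D (Suc e)" by (simp add: D_def algebra_simps)
    finally show ?thesis .
  qed
  have "\<forall>e. fps_nth (D e) n = 0" for n
  proof (induction n rule: less_induct)
    case (less n)
    show ?case
    proof
      fix e
      have "fps_nth (D e) n = (\<Sum>i=0..n. fps_nth B i * fps_nth (D (Suc e)) (n - i))"
        by (subst Drec) (simp add: fps_mult_nth)
      also have "\<dots> = 0"
      proof (rule sum.neutral, rule ballI)
        fix i assume "i \<in> {0..n}"
        show "fps_nth B i * fps_nth (D (Suc e)) (n - i) = 0"
        proof (cases "i = 0")
          case True then show ?thesis by (simp add: B0)
        next
          case False then have "n - i < n" using \<open>i \<in> {0..n}\<close> by auto
          then show ?thesis using less by simp
        qed
      qed
      finally show "fps_nth (D e) n = 0" .
    qed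
  qed
  then have "D e = 0" by (simp add: fps_ext)
  then show ?thesis by (simp add: D_def K_def B_def)
qed

lemma ring_expand:
  fixes a Y :: "'a::ring_1"
  shows "Y * (Y + a*Y)^m = Y^(Suc m) + (\<Sum>i=1..m. Y^i * a * (Y * (Y + a*Y)^(m - i)))"
proof (induction m)
  case 0 then show ?case by simp
next
  case (Suc m)
  define W where "W = Y + a*Y"
  have IH: "Y * W^m = Y^(Suc m) + (\<Sum>i=1..m. Y^i * a * (Y * W^(m - i)))" using Suc W_def by simp
  have "Y * W^(Suc m) = Y * (Y * W^m) + Y * a * (Y * W^m)"
    by (simp add: W_def algebra_simps power_Suc)
  also have "\<dots> = Y^(Suc (Suc m)) + (\<Sum>i=1..m. Y^(Suc i) * a * (Y * W^(m - i))) + Y^1 * a * (Y * W^m)"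
    unfolding IH by (simp add: algebra_simps sum_distrib_left power_Suc)
  also have "\<dots> = Y^(Suc (Suc m)) + (\<Sum>i=1..Suc m. Y^i * a * (Y * W^(Suc m - i)))"
  proof -
    have "(\<Sum>i=1..Suc m. Y^i * a * (Y * W^(Suc m - i))) = Y^1 * a * (Y * W^m) + (\<Sum>i=Suc 1..Suc m. Y^i * a * (Y * W^(Suc m - i)))"
      by (simp add: sum.atLeast_Suc_atMost)
    also have "(\<Sum>i=Suc 1..Suc m. Y^i * a * (Y * W^(Suc m - i))) = (\<Sum>i=1..m. Y^(Suc i) * a * (Y * W^(m - i)))"
      by (subst sum.shift_bounds_cl_Suc_ivl) simp
    finally show ?thesis by (simp add: algebra_simps)
  qed
  finally show ?case by (simp add: W_def)
qed

lemma add_sum: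
  fixes f :: "'a::ring_1 \<Rightarrow> complex"
  assumes add: "\<And>x y. f (x + y) = f x + f y"
  shows "f (sum g S) = (\<Sum>x\<in>S. f (g x))"
proof -
  have f0: "f 0 = 0" using add[of 0 0] by simp
  show ?thesis
    by (induction S rule: infinite_finite_induct) (simp_all add: f0 add)
qed

lemma gen_rec:
  fixes f :: "'a::ring_1 \<Rightarrow> complex" and a Y :: 'a
  assumes add: "\<And>x y. f (x + y) = f x + f y"
   and H1: "\<And>e i j. 1 \<le> i \<Longrightarrow> f (a^e * Y^i * a * (Y * (Y+a*Y)^j)) =
      (c i - b i) * f (a^e) * f (a^1 * (Y * (Y+a*Y)^j)) + b i * f (a^(Suc e) * (Y * (Y+a*Y)^j))"
   and H2: "\<And>e k. 1 \<le> k \<Longrightarrow> f (a^e * Y^k) = f (a^e) * c k"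
  shows "f (a^e * (Y * (Y+a*Y)^m)) = f (a^e) * c (Suc m) +
     (\<Sum>i=1..m. (c i - b i) * f (a^e) * f (a^1 * (Y * (Y+a*Y)^(m-i))) + b i * f (a^(Suc e) * (Y * (Y+a*Y)^(m-i))))"
proof -
  have "a^e * (Y * (Y+a*Y)^m) = a^e * Y^(Suc m) + (\<Sum>i=1..m. a^e * Y^i * a * (Y * (Y + a*Y)^(m - i)))"
    by (subst ring_expand) (simp add: distrib_left sum_distrib_left mult.assoc)
  then have "f (a^e * (Y * (Y+a*Y)^m)) = f (a^e * Y^(Suc m)) + (\<Sum>i=1..m. f (a^e * Y^i * a * (Y * (Y + a*Y)^(m - i))))"
    by (simp add: add add_sum[OF add])
  also have "\<dots> = f (a^e) * c (Suc m) +
     (\<Sum>i=1..m. (c i - b i) * f (a^e) * f (a^1 * (Y * (Y+a*Y)^(m-i))) + b i * f (a^(Suc e) * (Y * (Y+a*Y)^(m-i))))"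
  proof -
    have "f (a^e * Y^(Suc m)) = f (a^e) * c (Suc m)" by (rule H2) simp
    moreover have "(\<Sum>i=1..m. f (a^e * Y^i * a * (Y * (Y + a*Y)^(m - i)))) = 
       (\<Sum>i=1..m. (c i - b i) * f (a^e) * f (a^1 * (Y * (Y+a*Y)^(m-i))) + b i * f (a^(Suc e) * (Y * (Y+a*Y)^(m-i))))"
      by (rule sum.cong) (simp_all add: H1)
    ultimately show ?thesis by simp
  qed
  finally show ?thesis .
qed

lemma gen_main:
  fixes f :: "'a::ring_1 \<Rightarrow> complex" and a Y :: 'a
  assumes add: "\<And>x y. f (x + y) = f x + f y" and f1: "f 1 = 1"
   and H1: "\<And>e i j. 1 \<le> i \<Longrightarrow> f (a^e * Y^i * a * (Y * (Y+a*Y)^j)) =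
      (c i - b i) * f (a^e) * f (a^1 * (Y * (Y+a*Y)^j)) + b i * f (a^(Suc e) * (Y * (Y+a*Y)^j))"
   and H2: "\<And>e k. 1 \<le> k \<Longrightarrow> f (a^e * Y^k) = f (a^e) * c k"
  shows "\<exists>K. psi_fps (\<lambda>n. f ((Y+a*Y)^n)) =
           K * (1 + psi_fps b * fps_compose (Sf (\<lambda>e. f (a^e)) 1) (psi_fps b) + fps_compose (Sf (\<lambda>e. f (a^e)) 1) (psi_fps b))
         \<and> K * (1 - (psi_fps c - psi_fps b) * fps_compose (Sf (\<lambda>e. f (a^e)) 1) (psi_fps b)) = psi_fps c"
proof -
  define Q where "Q e m = f (a^e * (Y * (Y+a*Y)^m))" for e m
  define p where "p e = f (a^e)" for e
  have rec: "Q e m = p e * c (Suc m) +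
     (\<Sum>i=1..m. (c i - b i) * p e * Q 1 (m - i) + b i * Q (Suc e) (m - i))" for e m
    unfolding Q_def p_def by (rule gen_rec[OF add H1 H2])
  have p0: "p 0 = 1" by (simp add: p_def f1)
  define K where "K = psi_fps c + (psi_fps c - psi_fps b) * Qf Q 1"
  define s where "s = fps_compose (Sf p 1) (psi_fps b)"
  have Q1: "Qf Q 1 = K * s" using Qf_solve[OF rec, of 1] by (simp add: K_def s_def)
  have Q0: "Qf Q 0 = K * (1 + psi_fps b * s)"
    using Qf_solve[OF rec, of 0] Sf_compose_rec[of "psi_fps b" p 0] p0
    by (simp add: K_def s_def psi_fps_nth)
  have psiW: "psi_fps (\<lambda>n. f ((Y+a*Y)^n)) = Qf Q 0 + Qf Q 1"
  proof (rule fps_ext)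
    fix n show "fps_nth (psi_fps (\<lambda>n. f ((Y+a*Y)^n))) n = fps_nth (Qf Q 0 + Qf Q 1) n"
    proof (cases n)
      case 0 then show ?thesis by (simp add: psi_fps_nth Qf_nth)
    next
      case (Suc m)
      have "(Y+a*Y)^(Suc m) = 1 * (Y * (Y+a*Y)^m) + a^1 * (Y * (Y+a*Y)^m)"
        by (simp add: algebra_simps power_Suc)
      then show ?thesis using Suc by (simp add: psi_fps_nth Qf_nth Q_def add)
    qed
  qed
  show ?thesis
  proof (intro exI conjI)
    show "psi_fps (\<lambda>n. f ((Y+a*Y)^n)) = K * (1 + psi_fps b * fps_compose (Sf (\<lambda>e. f (a^e)) 1) (psi_fps b) + fps_compose (Sf (\<lambda>e. f (a^e)) 1) (psi_fps b))"
      using psiW Q0 Q1 by (simp add: s_def p_def[abs_def] algebra_simps)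
    have "K = psi_fps c + (psi_fps c - psi_fps b) * (K * s)" using Q1 K_def by simp
    then show "K * (1 - (psi_fps c - psi_fps b) * fps_compose (Sf (\<lambda>e. f (a^e)) 1) (psi_fps b)) = psi_fps c"
      by (simp add: s_def p_def[abs_def] algebra_simps)
  qed
qed

lemma rules_apply:
  assumes R: "cmono_rules f g I A" and "length is = length xs" "\<forall>k<length xs. xs ! k \<in> A (is ! k)" "set is \<subseteq> I"
  shows "2 \<le> length xs \<Longrightarrow> is ! 1 < is ! 0 \<Longrightarrow> f (prod_list xs) = f (xs ! 0) * f (prod_list (drop 1 xs))"
    and "2 \<le> length xs \<Longrightarrow> is ! (length xs - 2) < is ! (length xs - 1) \<Longrightarrow>
            f (prod_list xs) = f (prod_list (take (length xs - 1) xs)) * f (xs ! (length xs - 1))"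
    and "1 \<le> j \<Longrightarrow> j + 2 \<le> length xs \<Longrightarrow> is ! (j - 1) < is ! j \<Longrightarrow> is ! (j + 1) < is ! j \<Longrightarrow>
            f (prod_list xs) =
              (f (xs ! j) - g (xs ! j)) * f (prod_list (take j xs)) * f (prod_list (drop (j + 1) xs))
              + g (xs ! j) * f (prod_list (take j xs @ drop (j + 1) xs))"
  using R assms(2-4) unfolding cmono_rules_def Let_def by blast+

inductive inspan :: "'a::ring_1 set \<Rightarrow> 'a \<Rightarrow> bool" for S where
  word: "set ws \<subseteq> S \<Longrightarrow> inspan S (prod_list ws)"
| plus: "inspan S x \<Longrightarrow> inspan S y \<Longrightarrow> inspan S (x + y)"

lemma inspan_mult_word:
  assumes "inspan S x" "set vs \<subseteq> S"
  shows "inspan S (x * prod_list vs)"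
  using assms
proof (induction rule: inspan.induct)
  case (word ws)
  then show ?case using inspan.word[of "ws @ vs" S] by simp
next
  case (plus x y)
  then show ?case by (simp add: distrib_right inspan.plus)
qed

lemma YW_inspan:
  fixes a Y :: "'a::ring_1"
  assumes "a \<in> S" "Y \<in> S"
  shows "inspan S (Y * (Y + a*Y)^j)"
proof (induction j)
  case 0
  then show ?case using inspan.word[of "[Y]" S] assms by simp
next
  case (Suc j)
  have "Y * (Y + a*Y)^(Suc j) = Y * (Y + a*Y)^j * prod_list [Y] + Y * (Y + a*Y)^j * prod_list [a, Y]"
    by (simp add: power_Suc2 distrib_left distrib_right mult.assoc del: power_Suc)
  then show ?case using Suc assms
    by (metis inspan.plus inspan_mult_word empty_subsetI insert_subset list.set(1,2))
qed

lemma pow_in: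
  assumes "nonunital_subalgebra sm S" "x \<in> S" "1 \<le> e"
  shows "x ^ e \<in> S"
  using assms(3)
proof (induction e)
  case 0 then show ?case by simp
next
  case (Suc e)
  then show ?case
    using assms(1,2) unfolding nonunital_subalgebra_def
    by (cases "e = 0") (auto simp: power_Suc)
qed

lemma la2_valid:
  assumes "list_all2 (\<lambda>x i. x \<in> A i) xs js"
  shows "length js = length xs" "\<forall>k<length xs. xs ! k \<in> A (js ! k)"
  using assms by (auto simp: list_all2_conv_all_nth)

definition ixf :: "'a set \<Rightarrow> 'a \<Rightarrow> nat" where "ixf A1 x = (if x \<in> A1 then 1 else 2)"

lemma la2_ws:
  assumes "set ws \<subseteq> A1 \<union> A2"
  shows "list_all2 (\<lambda>x i. x \<in> (if i = (1::nat) then A1 else A2)) ws (map (ixf A1) ws)"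
  using assms by (induction ws) (auto simp: ixf_def)

lemma set_ixf: "set (map (ixf A1) ws) \<subseteq> {1, 2}"
  by (auto simp: ixf_def)

locale setting =
  fixes f g :: "'a::ring_1 \<Rightarrow> complex" and A1 A2 :: "'a set" and a Y :: 'a and sm
  assumes R: "cmono_rules f g {1::nat, 2} (\<lambda>i. if i = 1 then A1 else A2)"
    and sub1: "nonunital_subalgebra sm A1" and sub2: "nonunital_subalgebra sm A2"
    and a: "a \<in> A1" and Y: "Y \<in> A2"
    and add: "\<And>x y. f (x + y) = f x + f y" and f1: "f 1 = 1"
begin

lemma R1w:
  assumes "1 \<le> i" "set ws \<subseteq> A1 \<union> A2"
  shows "f (Y^i * a * prod_list ws) = f (Y^i) * f (a * prod_list ws)"
proof -
  define xs where "xs = [Y^i, a] @ ws"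
  define js where "js = [2::nat, 1] @ map (ixf A1) ws"
  have Yi: "Y^i \<in> A2" using pow_in[OF sub2 Y assms(1)] .
  have la: "list_all2 (\<lambda>x i. x \<in> (if i = (1::nat) then A1 else A2)) xs js"
    unfolding xs_def js_def using la2_ws[OF assms(2)] Yi a by simp
  have "f (prod_list xs) = f (xs ! 0) * f (prod_list (drop 1 xs))"
    by (rule rules_apply(1)[OF R la2_valid[OF la]]) (auto simp: xs_def js_def ixf_def)
  then show ?thesis by (simp add: xs_def mult.assoc)
qed

lemma R2w:
  assumes "1 \<le> e" "1 \<le> k"
  shows "f (a^e * Y^k) = f (a^e) * f (Y^k)"
proof -
  define xs where "xs = [a^e, Y^k]"
  define js where "js = [1::nat, 2]"
  have Yi: "Y^k \<in> A2" using pow_in[OF sub2 Y assms(2)] .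
  have ae: "a^e \<in> A1" using pow_in[OF sub1 a assms(1)] .
  have la: "list_all2 (\<lambda>x i. x \<in> (if i = (1::nat) then A1 else A2)) xs js"
    unfolding xs_def js_def using Yi ae by simp
  have "f (prod_list xs) = f (prod_list (take (length xs - 1) xs)) * f (xs ! (length xs - 1))"
    by (rule rules_apply(2)[OF R la2_valid[OF la]]) (auto simp: xs_def js_def)
  then show ?thesis by (simp add: xs_def)
qed

lemma R3w:
  assumes "1 \<le> e" "1 \<le> i" "set ws \<subseteq> A1 \<union> A2"
  shows "f (a^e * Y^i * a * prod_list ws) = (f (Y^i) - g (Y^i)) * f (a^e) * f (a * prod_list ws)
           + g (Y^i) * f (a^(Suc e) * prod_list ws)"
proof -
  define xs where "xs = [a^e, Y^i, a] @ ws"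
  define js where "js = [1::nat, 2, 1] @ map (ixf A1) ws"
  have Yi: "Y^i \<in> A2" using pow_in[OF sub2 Y assms(2)] .
  have ae: "a^e \<in> A1" using pow_in[OF sub1 a assms(1)] .
  have la: "list_all2 (\<lambda>x i. x \<in> (if i = (1::nat) then A1 else A2)) xs js"
    unfolding xs_def js_def using la2_ws[OF assms(3)] Yi a ae by simp
  have "f (prod_list xs) =
              (f (xs ! 1) - g (xs ! 1)) * f (prod_list (take 1 xs)) * f (prod_list (drop (1 + 1) xs))
              + g (xs ! 1) * f (prod_list (take 1 xs @ drop (1 + 1) xs))"
    by (rule rules_apply(3)[OF R la2_valid[OF la]]) (auto simp: xs_def js_def ixf_def)
  moreover have "a^e * (a * prod_list ws) = a * (a^e * prod_list ws)"
    by (simp add: mult.assoc[symmetric] power_commutes)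
  ultimately show ?thesis by (simp add: xs_def mult.assoc)
qed

lemma add_sum': "f (sum h S) = (\<Sum>x\<in>S. f (h x))" by (rule add_sum[OF add])

lemma R1s:
  assumes "1 \<le> i" "inspan (A1 \<union> A2) T"
  shows "f (Y^i * a * T) = f (Y^i) * f (a * T)"
  using assms(2)
proof (induction rule: inspan.induct)
  case (word ws) then show ?case using R1w[OF assms(1)] by simp
next
  case (plus x y) then show ?case by (simp add: distrib_left add algebra_simps)
qed

lemma R3s:
  assumes "1 \<le> e" "1 \<le> i" "inspan (A1 \<union> A2) T"
  shows "f (a^e * Y^i * a * T) = (f (Y^i) - g (Y^i)) * f (a^e) * f (a * T) + g (Y^i) * f (a^(Suc e) * T)"
  using assms(3)
proof (induction rule: inspan.induct)
  case (word ws) then show ?case using R3w[OF assms(1,2)] by simp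
next
  case (plus x y) then show ?case by (simp add: distrib_left add algebra_simps)
qed

lemma H1:
  assumes "1 \<le> i"
  shows "f (a^e * Y^i * a * (Y * (Y+a*Y)^j)) =
      (f (Y^i) - g (Y^i)) * f (a^e) * f (a^1 * (Y * (Y+a*Y)^j)) + g (Y^i) * f (a^(Suc e) * (Y * (Y+a*Y)^j))"
proof -
  have T: "inspan (A1 \<union> A2) (Y * (Y+a*Y)^j)" by (rule YW_inspan) (use a Y in auto)
  show ?thesis
  proof (cases "e = 0")
    case True then show ?thesis using R1s[OF assms T] by (simp add: f1 algebra_simps)
  next
    case False then show ?thesis using R3s[OF _ assms T, of e] by simp
  qed
qed

lemma H2:
  assumes "1 \<le> k"
  shows "f (a^e * Y^k) = f (a^e) * f (Y^k)"
  using R2w[OF _ assms, of e] by (cases "e = 0") (auto simp: f1)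

lemma main:
  "\<exists>K. psi_fps (\<lambda>n. f ((Y+a*Y)^n)) =
           K * (1 + psi_fps (\<lambda>k. g (Y^k)) * fps_compose (Sf (\<lambda>e. f (a^e)) 1) (psi_fps (\<lambda>k. g (Y^k))) + fps_compose (Sf (\<lambda>e. f (a^e)) 1) (psi_fps (\<lambda>k. g (Y^k))))
         \<and> K * (1 - (psi_fps (\<lambda>k. f (Y^k)) - psi_fps (\<lambda>k. g (Y^k))) * fps_compose (Sf (\<lambda>e. f (a^e)) 1) (psi_fps (\<lambda>k. g (Y^k)))) = psi_fps (\<lambda>k. f (Y^k))"
  by (rule gen_main[OF add f1 H1 H2])

end

lemma main_one:
  fixes f :: "'a::ring_1 \<Rightarrow> complex"
  assumes add: "\<And>x y. f (x + y) = f x + f y" and f1: "f 1 = 1"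
  shows "psi_fps (\<lambda>n. f ((1+a)^n)) =
           psi_fps (\<lambda>_. 1) * (1 + psi_fps (\<lambda>_. 1) * fps_compose (Sf (\<lambda>e. f (a^e)) 1) (psi_fps (\<lambda>_. 1)) + fps_compose (Sf (\<lambda>e. f (a^e)) 1) (psi_fps (\<lambda>_. 1)))"
proof -
  have H1: "f (a^e * 1^i * a * (1 * (1+a*1)^j)) =
      (1 - 1) * f (a^e) * f (a^1 * (1 * (1+a*1)^j)) + 1 * f (a^(Suc e) * (1 * (1+a*1)^j))" for e i j
    by (simp add: power_Suc2 mult.assoc del: power_Suc)
  have H2: "f (a^e * 1^k) = f (a^e) * 1" for e k by simp
  obtain K where K: "psi_fps (\<lambda>n. f ((1+a*1)^n)) =
           K * (1 + psi_fps (\<lambda>_. 1) * fps_compose (Sf (\<lambda>e. f (a^e)) 1) (psi_fps (\<lambda>_. 1)) + fps_compose (Sf (\<lambda>e. f (a^e)) 1) (psi_fps (\<lambda>_. 1)))"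
         "K * (1 - (psi_fps (\<lambda>_. 1) - psi_fps (\<lambda>_. 1)) * fps_compose (Sf (\<lambda>e. f (a^e)) 1) (psi_fps (\<lambda>_. 1))) = psi_fps (\<lambda>_. 1)"
    using gen_main[OF add f1, of a 1 "\<lambda>_. 1" "\<lambda>_. 1"] H1 H2 by blast
  from K(2) have "K = psi_fps (\<lambda>_. 1)" by simp
  with K(1) show ?thesis by simp
qed


lemma nz: "fps_nth F 0 \<noteq> 0 \<Longrightarrow> F \<noteq> 0" by auto

lemma div_eq_lemma:
  fixes x y z w :: "complex fps"
  assumes "fps_nth y 0 \<noteq> 0" "fps_nth w 0 \<noteq> 0" "x * w = z * y"
  shows "x / y = z / w"
proof -
  have "x / y = x * inverse y" using assms(1) by (simp add: fps_divide_unit)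
  also have "\<dots> = x * (w * inverse w) * inverse y" using inverse_mult_eq_1'[OF assms(2)] by simp
  also have "\<dots> = (z * y) * inverse y * inverse w" using assms(3) by (simp add: mult_ac)
  also have "\<dots> = z * inverse w" using inverse_mult_eq_1'[OF assms(1)] by (simp add: mult_ac)
  also have "\<dots> = z / w" using assms(2) by (simp add: fps_divide_unit)
  finally show ?thesis .
qed

lemma unit_div_mult:
  fixes y w :: "complex fps"
  assumes "fps_nth w 0 \<noteq> 0" "y * w = x"
  shows "y = x / w"
  using div_eq_lemma[of 1 w y x] assms by (simp add: mult_ac)

lemma V0: "fps_nth (psi_fps (\<lambda>_. 1)) 0 = 0" by (simp add: psi_fps_nth)

lemma V_X: "psi_fps (\<lambda>_. 1) = fps_X * (1 + psi_fps (\<lambda>_. 1))"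
  by (rule fps_ext) (simp add: psi_fps_nth)

lemma V_X2: "psi_fps (\<lambda>_. 1) * (1 - fps_X) = fps_X"
proof -
  have "psi_fps (\<lambda>_. 1) - fps_X * psi_fps (\<lambda>_. 1) = fps_X" using V_X by (simp add: algebra_simps)
  then show ?thesis by (simp add: algebra_simps)
qed

lemma nth0_mult_zero: "fps_nth B 0 = 0 \<Longrightarrow> fps_nth (B * F) 0 = (0::complex)"
  by simp

lemma u_facts:
  fixes B :: "complex fps"
  assumes B0: "fps_nth B 0 = 0"
  shows "fps_nth (B / (1 + B)) 0 = 0" "B / (1 + B) * (1 + B) = B"
    "fps_compose (psi_fps (\<lambda>_. 1)) (B / (1 + B)) = B"
proof -
  have u: "B / (1 + B) = B * inverse (1 + B)" using B0 by (simp add: fps_divide_unit)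
  show u0: "fps_nth (B / (1 + B)) 0 = 0" unfolding u using B0 by simp
  show hu: "B / (1 + B) * (1 + B) = B" unfolding u using inverse_mult_eq_1[of "1+B"] B0
    by (simp add: mult.assoc)
  define u' where "u' = B / (1 + B)"
  define V where "V = psi_fps (\<lambda>_. 1 :: complex)"
  have "fps_compose (V * (1 - fps_X)) u' = fps_compose fps_X u'" using V_X2 by (simp add: V_def)
  then have 1: "fps_compose V u' * (1 - u') = u'"
    using u0 by (simp add: fps_compose_mult_distrib fps_compose_sub_distrib u'_def)
  have 2: "(1 - u') * (1 + B) = 1" using hu by (simp add: u'_def algebra_simps)
  have "fps_compose V u' = fps_compose V u' * ((1 - u') * (1 + B))" using 2 by simp
  also have "\<dots> = u' * (1 + B)" using 1 by (simp add: mult.assoc[symmetric])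
  also have "\<dots> = B" using hu by (simp add: u'_def)
  finally show "fps_compose (psi_fps (\<lambda>_. 1)) (B / (1 + B)) = B" by (simp add: V_def u'_def)
qed

lemma shift_X: "fps_shift 1 F * fps_X = F - fps_const (fps_nth F 0 :: complex)"
  by (subst mult.commute) (rule fps_ext, simp)

lemma final_phi:
  fixes S1 C B K PW PX :: "complex fps"
  assumes C0: "fps_nth C 0 = 0" and B0: "fps_nth B 0 = 0"
    and PW: "PW = K * (1 + B * fps_compose S1 B + fps_compose S1 B)"
    and KD: "K * (1 - (C - B) * fps_compose S1 B) = C"
    and PX: "PX = psi_fps (\<lambda>_. 1) * (1 + psi_fps (\<lambda>_. 1) * fps_compose S1 (psi_fps (\<lambda>_. 1)) + fps_compose S1 (psi_fps (\<lambda>_. 1)))"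
  shows "PW / (1 + PW) = C / (1 + C) * fps_compose (fps_shift 1 (PX / (1 + PX))) (B / (1 + B))"
proof -
  define V where "V = psi_fps (\<lambda>_. 1 :: complex)"
  define u where "u = B / (1 + B)"
  define sV where "sV = fps_compose S1 V"
  define s where "s = fps_compose S1 B"
  have V0': "fps_nth V 0 = 0" by (simp add: V_def V0)
  have u0: "fps_nth u 0 = 0" and Vu: "fps_compose V u = B" using u_facts[OF B0] by (simp_all add: u_def V_def)
  have sVu: "fps_compose sV u = s"
    unfolding sV_def s_def using fps_compose_assoc[OF u0 V0', of S1] Vu by simp
  have PX0: "fps_nth PX 0 = 0" using PX V0 by simp
  define eX where "eX = PX / (1 + PX)"
  have eX: "eX * (1 + PX) = PX"
    unfolding eX_def using PX0 by (simp add: fps_divide_unit mult.assoc inverse_mult_eq_1)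
  have eX0: "fps_nth eX 0 = 0" unfolding eX_def using PX0 by (simp add: fps_divide_unit)
  define G where "G = fps_shift 1 eX"
  have GX: "G * fps_X = eX" using shift_X[of eX] eX0 by (simp add: G_def)
  have "fps_X * (1 + V) * (G * (1 + V * sV)) = fps_X * (1 + V) * (1 + V * sV + sV)"
  proof -
    have "fps_X * (1 + V) * (G * (1 + V * sV)) = (G * fps_X) * ((1 + V) * (1 + V * sV))" by (simp add: mult_ac)
    also have "(1 + V) * (1 + V * sV) = 1 + PX" by (simp add: PX V_def[symmetric] sV_def[symmetric] algebra_simps)
    also have "G * fps_X * (1 + PX) = PX" using GX eX by simp
    also have "PX = V * (1 + V * sV + sV)" by (simp add: PX V_def sV_def)
    also have "\<dots> = fps_X * (1 + V) * (1 + V * sV + sV)" using V_X by (simp add: V_def[symmetric])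
    finally show ?thesis .
  qed
  moreover have "fps_X * (1 + V) \<noteq> 0"
  proof -
    have "1 + V \<noteq> 0"
    proof
      assume h: "1 + V = 0"
      have "fps_nth (1 + V) 0 = fps_nth 0 0" by (simp only: h)
      then show False using V0' by simp
    qed
    then show ?thesis by simp
  qed
  ultimately have Geq: "G * (1 + V * sV) = 1 + V * sV + sV" by simp
  define g where "g = fps_compose G u"
  have geq: "g * (1 + B * s) = 1 + B * s + s"
  proof -
    have "fps_compose (G * (1 + V * sV)) u = fps_compose (1 + V * sV + sV) u" using Geq by simp
    then show ?thesis using u0 Vu sVu
      by (simp add: fps_compose_mult_distrib fps_compose_add_distrib g_def)
  qed
  define N where "N = 1 + B * s + s"
  define D where "D = 1 - (C - B) * s"
  have PWN: "PW = K * N" by (simp add: PW N_def s_def)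
  have KD': "K * D = C" using KD by (simp add: D_def s_def)
  have "D * (1 + B * s) * (PW * (1 + C)) = (K * D) * N * ((1 + C) * (1 + B * s))"
    by (simp add: PWN mult_ac)
  also have "\<dots> = C * N * (D + C * N)" by (simp only: KD') (simp add: D_def N_def algebra_simps)
  also have "\<dots> = C * (g * (1 + B * s)) * (D + (K * D) * N)" by (simp only: geq KD' N_def)
  also have "\<dots> = D * (1 + B * s) * (C * g * (1 + PW))" by (simp add: PWN algebra_simps)
  finally have eq1: "D * (1 + B * s) * (PW * (1 + C)) = D * (1 + B * s) * (C * g * (1 + PW))" .
  have "D * (1 + B * s) \<noteq> 0" by (rule nz) (use C0 B0 in \<open>simp add: D_def\<close>)
  with eq1 have eq2: "PW * (1 + C) = C * g * (1 + PW)" by simp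
  have "fps_nth (K * D) 0 = 0" using KD' C0 by simp
  moreover have "fps_nth D 0 = 1" using C0 B0 by (simp add: D_def)
  ultimately have K0: "fps_nth K 0 = 0" by simp
  have PW0: "fps_nth PW 0 = 0" using PWN K0 by simp
  have "PW / (1 + PW) = (C * g) / (1 + C)"
    by (rule div_eq_lemma) (use PW0 C0 eq2 in simp_all)
  also have "\<dots> = C / (1 + C) * g" using C0 by (simp add: fps_divide_unit mult_ac)
  finally show ?thesis by (simp add: g_def G_def eX_def u_def)
qed

lemma final_psi:
  fixes S1 B PW PX :: "complex fps"
  assumes B0: "fps_nth B 0 = 0"
    and PW: "PW = B * (1 + B * fps_compose S1 B + fps_compose S1 B)"
    and PX: "PX = psi_fps (\<lambda>_. 1) * (1 + psi_fps (\<lambda>_. 1) * fps_compose S1 (psi_fps (\<lambda>_. 1)) + fps_compose S1 (psi_fps (\<lambda>_. 1)))"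
  shows "PW / (1 + PW) = fps_compose (PX / (1 + PX)) (B / (1 + B))"
proof -
  define V where "V = psi_fps (\<lambda>_. 1 :: complex)"
  define u where "u = B / (1 + B)"
  define sV where "sV = fps_compose S1 V"
  define s where "s = fps_compose S1 B"
  have V0': "fps_nth V 0 = 0" by (simp add: V_def V0)
  have u0: "fps_nth u 0 = 0" and Vu: "fps_compose V u = B" using u_facts[OF B0] by (simp_all add: u_def V_def)
  have sVu: "fps_compose sV u = s"
    unfolding sV_def s_def using fps_compose_assoc[OF u0 V0', of S1] Vu by simp
  have PX0: "fps_nth PX 0 = 0" using PX V0 by simp
  define eX where "eX = PX / (1 + PX)"
  have eX: "eX * (1 + PX) = PX"
    unfolding eX_def using PX0 by (simp add: fps_divide_unit mult.assoc inverse_mult_eq_1)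
  have PXu: "fps_compose PX u = PW"
    using u0 Vu sVu by (simp add: PX PW V_def[symmetric] sV_def[symmetric] s_def[symmetric]
        fps_compose_mult_distrib fps_compose_add_distrib)
  have "fps_compose (eX * (1 + PX)) u = fps_compose PX u" using eX by simp
  then have "fps_compose eX u * (1 + PW) = PW"
    using u0 PXu by (simp add: fps_compose_mult_distrib fps_compose_add_distrib)
  moreover have "fps_nth (1 + PW) 0 \<noteq> 0" using B0 PW by simp
  ultimately have "fps_compose eX u = PW / (1 + PW)" by (rule unit_div_mult[rotated])
  then show ?thesis by (simp add: eX_def u_def)
qed



lemma eta_coeff1:
  fixes m :: "nat \<Rightarrow> complex"
  shows "fps_nth (eta_fps m) 1 = m 1"
proof -
  define P where "P = psi_fps m"
  have P0: "fps_nth P 0 = 0" by (simp add: P_def psi_fps_nth)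
  define E where "E = P / (1 + P)"
  have E: "E * (1 + P) = P" unfolding E_def using P0 by (simp add: fps_divide_unit mult.assoc inverse_mult_eq_1)
  have E0: "fps_nth E 0 = 0" unfolding E_def using P0 by (simp add: fps_divide_unit)
  have "fps_nth (E * (1 + P)) 1 = fps_nth P 1" using E by simp
  then have "fps_nth E 1 = fps_nth P 1" using E0 P0 by (simp add: fps_mult_nth)
  then show ?thesis by (simp add: E_def P_def eta_fps_def psi_fps_nth)
qed

lemma fps_part:
  fixes sm :: "complex \<Rightarrow> 'a::ring_1 \<Rightarrow> 'a"
    and \<phi> \<psi> :: "'a \<Rightarrow> complex"
    and A1 A2 :: "'a set"
    and X Y :: 'a
  assumes aps: "alg_prob_space sm \<phi> \<psi>"
    and indep: "c_monotone_independent sm \<phi> \<psi> {1::nat, 2} (\<lambda>i. if i = 1 then A1 else A2)"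
    and X1: "X - 1 \<in> A1" and Y2: "Y \<in> A2"
  shows
    "eta_fps (distr \<phi> (X * Y)) =
       eta_fps (distr \<phi> Y) * fps_compose (fps_shift 1 (eta_fps (distr \<phi> X))) (eta_fps (distr \<psi> Y))
     \<and> eta_fps (distr \<psi> (X * Y)) = fps_compose (eta_fps (distr \<psi> X)) (eta_fps (distr \<psi> Y))
     \<and> (eta_fps (distr \<psi> Y) = 0 \<longrightarrow>
          eta_fps (distr \<phi> (X * Y)) = fps_const (\<phi> X) * eta_fps (distr \<phi> Y))"
proof -
  define a where "a = X - 1"
  have XY: "X * Y = Y + a * Y" by (simp add: a_def algebra_simps)
  have Xa: "X = 1 + a" by (simp add: a_def)
  have addphi: "\<And>x y. \<phi> (x + y) = \<phi> x + \<phi> y" and phi1: "\<phi> 1 = 1"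
    and addpsi: "\<And>x y. \<psi> (x + y) = \<psi> x + \<psi> y" and psi1: "\<psi> 1 = 1"
    using aps unfolding alg_prob_space_def unital_functional_def by auto
  have sub1: "nonunital_subalgebra sm A1" and sub2: "nonunital_subalgebra sm A2"
    and Rphi: "cmono_rules \<phi> \<psi> {1::nat, 2} (\<lambda>i. if i = 1 then A1 else A2)"
    and Rpsi: "cmono_rules \<psi> \<psi> {1::nat, 2} (\<lambda>i. if i = 1 then A1 else A2)"
    using indep unfolding c_monotone_independent_def by (auto dest: bspec[of _ _ 1] bspec[of _ _ 2])
  have a: "a \<in> A1" using X1 by (simp add: a_def)
  interpret sphi: setting \<phi> \<psi> A1 A2 a Y sm
    by unfold_locales (fact Rphi sub1 sub2 a Y2 addphi phi1)+
  interpret spsi: setting \<psi> \<psi> A1 A2 a Y sm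
    by unfold_locales (fact Rpsi sub1 sub2 a Y2 addpsi psi1)+
  have dist: "distr f Z = (\<lambda>n. f (Z ^ n))" for f and Z :: 'a by (simp add: distr_def)
  obtain K where K: "psi_fps (distr \<phi> (X * Y)) =
           K * (1 + psi_fps (distr \<psi> Y) * fps_compose (Sf (\<lambda>e. \<phi> (a^e)) 1) (psi_fps (distr \<psi> Y)) + fps_compose (Sf (\<lambda>e. \<phi> (a^e)) 1) (psi_fps (distr \<psi> Y)))"
     "K * (1 - (psi_fps (distr \<phi> Y) - psi_fps (distr \<psi> Y)) * fps_compose (Sf (\<lambda>e. \<phi> (a^e)) 1) (psi_fps (distr \<psi> Y))) = psi_fps (distr \<phi> Y)"
    using sphi.main unfolding dist XY by blast
  obtain K' where K': "psi_fps (distr \<psi> (X * Y)) =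
           K' * (1 + psi_fps (distr \<psi> Y) * fps_compose (Sf (\<lambda>e. \<psi> (a^e)) 1) (psi_fps (distr \<psi> Y)) + fps_compose (Sf (\<lambda>e. \<psi> (a^e)) 1) (psi_fps (distr \<psi> Y)))"
     "K' * (1 - (psi_fps (distr \<psi> Y) - psi_fps (distr \<psi> Y)) * fps_compose (Sf (\<lambda>e. \<psi> (a^e)) 1) (psi_fps (distr \<psi> Y))) = psi_fps (distr \<psi> Y)"
    using spsi.main unfolding dist XY by blast
  have K'B: "K' = psi_fps (distr \<psi> Y)" using K'(2) by simp
  have PXphi: "psi_fps (distr \<phi> X) = psi_fps (\<lambda>_. 1) * (1 + psi_fps (\<lambda>_. 1) * fps_compose (Sf (\<lambda>e. \<phi> (a^e)) 1) (psi_fps (\<lambda>_. 1)) + fps_compose (Sf (\<lambda>e. \<phi> (a^e)) 1) (psi_fps (\<lambda>_. 1)))"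
    using main_one[OF addphi phi1, of a] unfolding dist Xa by simp
  have PXpsi: "psi_fps (distr \<psi> X) = psi_fps (\<lambda>_. 1) * (1 + psi_fps (\<lambda>_. 1) * fps_compose (Sf (\<lambda>e. \<psi> (a^e)) 1) (psi_fps (\<lambda>_. 1)) + fps_compose (Sf (\<lambda>e. \<psi> (a^e)) 1) (psi_fps (\<lambda>_. 1)))"
    using main_one[OF addpsi psi1, of a] unfolding dist Xa by simp
  have c1: "eta_fps (distr \<phi> (X * Y)) =
       eta_fps (distr \<phi> Y) * fps_compose (fps_shift 1 (eta_fps (distr \<phi> X))) (eta_fps (distr \<psi> Y))"
    unfolding eta_fps_def
    by (rule final_phi[OF _ _ K(1) K(2) PXphi]) (simp_all add: psi_fps_nth)
  have c2: "eta_fps (distr \<psi> (X * Y)) = fps_compose (eta_fps (distr \<psi> X)) (eta_fps (distr \<psi> Y))"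
    unfolding eta_fps_def
    by (rule final_psi[OF _ K'(1)[unfolded K'B] PXpsi]) (simp_all add: psi_fps_nth)
  have c3: "eta_fps (distr \<phi> (X * Y)) = fps_const (\<phi> X) * eta_fps (distr \<phi> Y)"
    if "eta_fps (distr \<psi> Y) = 0"
  proof -
    have "fps_nth (fps_shift 1 (eta_fps (distr \<phi> X))) 0 = \<phi> X"
      using eta_coeff1[of "distr \<phi> X"] by (simp add: distr_def)
    then show ?thesis using c1 that by (simp add: mult.commute)
  qed
  show ?thesis using c1 c2 c3 by blast
qed



lemma re_bound:
  fixes w :: complex
  assumes "norm w < 1"
  shows "Re (w / (1 - w)) \<ge> - norm w / (1 + norm w)"
proof -
  define x where "x = Re w"
  define y where "y = Im w"
  define r where "r = norm w"
  have r2: "r^2 = x^2 + y^2" unfolding r_def x_def y_def by (simp add: cmod_power2)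
  have r0: "0 \<le> r" "r < 1" using assms by (simp_all add: r_def)
  have "\<bar>x\<bar> \<le> r" unfolding x_def r_def by (rule abs_Re_le_cmod)
  then have xr: "-r \<le> x" "x \<le> r" by linarith+
  define D where "D = (1 - x)^2 + y^2"
  have D: "D = 1 - 2*x + r^2" unfolding D_def using r2 by (simp add: power2_eq_square algebra_simps)
  have Dpos: "0 < D"
  proof -
    have "(1 - r)^2 \<le> D" unfolding D using xr by (simp add: power2_eq_square algebra_simps)
    moreover have "0 < (1 - r)^2" using r0 by simp
    ultimately show ?thesis by linarith
  qed
  have re: "Re (w / (1 - w)) = (x - r^2) / D"
    unfolding Re_divide D_def x_def y_def using r2 by (simp add: x_def y_def power2_eq_square algebra_simps)
  have key: "(x - r^2) * (1 + r) + r * D = (1 - r) * (x + r)"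
    unfolding D by (simp add: power2_eq_square algebra_simps)
  have "0 \<le> (1 - r) * (x + r)" using r0 xr by simp
  then have "- r * D \<le> (x - r^2) * (1 + r)" using key by linarith
  then have "- r / (1 + r) \<le> (x - r^2) / D"
    using Dpos r0 by (simp add: divide_simps mult.commute)
  then show ?thesis using re by (simp add: r_def)
qed

lemma geo_shift:
  fixes w :: complex
  assumes "norm w < 1"
  shows "(\<lambda>i. if i = 0 then 0 else w^i) sums (w / (1 - w))"
proof -
  have "(\<lambda>n. w * w^n) sums (w * (1 / (1 - w)))"
    by (rule sums_mult) (rule geometric_sums[OF assms])
  then have "(\<lambda>n. (\<lambda>i. if i = 0 then 0 else w^i) (Suc n)) sums (w / (1 - w))" by simp
  then show ?thesis by (subst (asm) sums_Suc_iff) simp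
qed

context
  fixes M :: "complex measure"
  assumes pc: "prob_on_circle M"
begin

interpretation prob_space M using pc by (simp add: prob_on_circle_def)

lemma sets_M: "sets M = sets borel" using pc by (simp add: prob_on_circle_def)

lemma measM: assumes "h \<in> borel_measurable borel" shows "h \<in> borel_measurable M"
  by (subst measurable_cong_sets[OF sets_M refl]) (rule assms)

lemma AE1: "AE \<zeta> in M. norm \<zeta> = 1"
proof (rule AE_I')
  have "- sphere (0::complex) 1 \<in> sets borel" by (simp add: borel_open)
  then show "- sphere (0::complex) 1 \<in> null_sets M"
    using pc sets_M by (simp add: prob_on_circle_def null_sets_def)
  show "{x \<in> space M. norm x \<noteq> 1} \<subseteq> - sphere 0 1" by auto
qed

lemma intbound:
  fixes h :: "complex \<Rightarrow> complex"
  assumes "h \<in> borel_measurable borel" "AE \<zeta> in M. norm (h \<zeta>) \<le> K"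
  shows "integrable M h"
proof -
  have 1: "integrable M (\<lambda>_::complex. K)" by simp
  have 2: "AE x in M. norm (h x) \<le> norm ((\<lambda>_::complex. K) x)" using assms(2) by eventually_elim auto
  show ?thesis by (rule Bochner_Integration.integrable_bound[OF 1 measM[OF assms(1)] 2])
qed

lemma psi_sums:
  assumes z: "norm z < 1"
  shows "(\<lambda>n. fps_nth (psi_fps (moments M)) n * z^n) sums psi_meas M z"
   and "integrable M (\<lambda>\<zeta>. z * \<zeta> / (1 - z * \<zeta>))"
proof -
  define f where "f i \<zeta> = (if i = 0 then 0 else z^i * \<zeta>^i)" for i and \<zeta> :: complex
  have fm: "f i \<in> borel_measurable borel" for i by (cases "i = 0") (simp_all add: f_def[abs_def])
  have fb: "norm (f i \<zeta>) = (if i = 0 then 0 else norm z ^ i)" if "norm \<zeta> = 1" for i \<zeta>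
    using that by (simp add: f_def norm_mult norm_power)
  have fi: "integrable M (f i)" for i
    by (rule intbound[OF fm, of _ "norm z ^ i"]) (use AE1 in \<open>eventually_elim, simp add: fb\<close>)
  have geo: "summable (\<lambda>i. norm z ^ i)" by (rule summable_geometric) (simp add: z)
  have s1: "AE \<zeta> in M. summable (\<lambda>i. norm (f i \<zeta>))"
    using AE1
  proof eventually_elim
    case (elim \<zeta>)
    show ?case by (rule summable_comparison_test'[OF geo, of 0]) (simp add: fb[OF elim])
  qed
  have intn: "(\<integral>\<zeta>. norm (f i \<zeta>) \<partial>M) = (if i = 0 then 0 else norm z ^ i)" for i
  proof -
    have "(\<integral>\<zeta>. norm (f i \<zeta>) \<partial>M) = (\<integral>\<zeta>. (if i = 0 then 0 else norm z ^ i) \<partial>M)"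
    proof (rule integral_cong_AE)
      show "(\<lambda>\<zeta>. norm (f i \<zeta>)) \<in> borel_measurable M" by (rule measM, rule measurable_compose[OF fm borel_measurable_norm])
      show "(\<lambda>\<zeta>. if i = 0 then 0 else norm z ^ i) \<in> borel_measurable M" by simp
      show "AE \<zeta> in M. norm (f i \<zeta>) = (if i = 0 then 0 else norm z ^ i)" using AE1 by eventually_elim (simp add: fb)
    qed
    then show ?thesis by (simp add: prob_space)
  qed
  have s2: "summable (\<lambda>i. \<integral>\<zeta>. norm (f i \<zeta>) \<partial>M)"
    unfolding intn by (rule summable_comparison_test'[OF geo, of 0]) simp
  have sI: "(\<lambda>i. integral\<^sup>L M (f i)) sums (\<integral>\<zeta>. (\<Sum>i. f i \<zeta>) \<partial>M)"
    by (rule sums_integral[OF fi s1 s2])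
  have intS: "integrable M (\<lambda>\<zeta>. \<Sum>i. f i \<zeta>)"
    by (rule integrable_suminf[OF fi s1 s2])
  have intf: "integral\<^sup>L M (f i) = fps_nth (psi_fps (moments M)) i * z^i" for i
    by (cases "i = 0") (simp_all add: f_def[abs_def] psi_fps_def moments_def mult.commute)
  have eqS: "AE \<zeta> in M. (\<Sum>i. f i \<zeta>) = z * \<zeta> / (1 - z * \<zeta>)"
    using AE1
  proof eventually_elim
    case (elim \<zeta>)
    have nz1: "norm (z * \<zeta>) < 1" using z elim by (simp add: norm_mult)
    have "(\<lambda>i. f i \<zeta>) = (\<lambda>i. if i = 0 then 0 else (z * \<zeta>)^i)"
      by (simp add: fun_eq_iff f_def power_mult_distrib)
    with geo_shift[OF nz1] have "(\<lambda>i. f i \<zeta>) sums (z * \<zeta> / (1 - z * \<zeta>))"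
      by simp
    then show ?case by (simp add: sums_iff)
  qed
  have gm: "(\<lambda>\<zeta>. z * \<zeta> / (1 - z * \<zeta>)) \<in> borel_measurable M" by (rule measM) simp
  have "(\<integral>\<zeta>. (\<Sum>i. f i \<zeta>) \<partial>M) = (\<integral>\<zeta>. z * \<zeta> / (1 - z * \<zeta>) \<partial>M)"
    by (rule integral_cong_AE[OF borel_measurable_integrable[OF intS] gm eqS])
  then show "(\<lambda>n. fps_nth (psi_fps (moments M)) n * z^n) sums psi_meas M z"
    using sI by (simp add: intf psi_meas_def)
  show "integrable M (\<lambda>\<zeta>. z * \<zeta> / (1 - z * \<zeta>))"
    by (rule integrable_cong_AE_imp[OF intS gm eqS])
qed


lemma psi_re:
  assumes z: "norm z < 1"
  shows "Re (psi_meas M z) \<ge> - norm z / (1 + norm z)"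
proof -
  have int: "integrable M (\<lambda>\<zeta>. z * \<zeta> / (1 - z * \<zeta>))" by (rule psi_sums(2)[OF z])
  have "(\<integral>\<zeta>. - norm z / (1 + norm z) \<partial>M) \<le> (\<integral>\<zeta>. Re (z * \<zeta> / (1 - z * \<zeta>)) \<partial>M)"
  proof (rule integral_mono_AE)
    show "integrable M (\<lambda>\<zeta>. - norm z / (1 + norm z))" by simp
    show "integrable M (\<lambda>\<zeta>. Re (z * \<zeta> / (1 - z * \<zeta>)))" using int by simp
    show "AE \<zeta> in M. - norm z / (1 + norm z) \<le> Re (z * \<zeta> / (1 - z * \<zeta>))"
      using AE1
    proof eventually_elim
      case (elim \<zeta>)
      have "norm (z * \<zeta>) = norm z" using elim by (simp add: norm_mult)
      then show ?case using re_bound[of "z * \<zeta>"] z by simp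
    qed
  qed
  moreover have "(\<integral>\<zeta>. Re (z * \<zeta> / (1 - z * \<zeta>)) \<partial>M) = Re (\<integral>\<zeta>. z * \<zeta> / (1 - z * \<zeta>) \<partial>M)"
    by (rule integral_Re) (fact int)
  ultimately show ?thesis by (simp add: psi_meas_def prob_space)
qed

lemma eta_facts:
  assumes z: "norm z < 1"
  shows "1 + psi_meas M z \<noteq> 0" "norm (eta_meas M z) < 1"
proof -
  define p where "p = psi_meas M z"
  define r where "r = norm z"
  have r: "0 \<le> r" "r < 1" using z by (simp_all add: r_def)
  have h1: "r / (1 + r) < 1/2" using r by (simp add: field_simps)
  have "Re p \<ge> - (r / (1 + r))" using psi_re[OF z] by (simp add: p_def r_def)
  with h1 have rep: "Re p > -1/2" by linarith
  show "1 + psi_meas M z \<noteq> 0"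
  proof
    assume "1 + psi_meas M z = 0"
    then have "Re (1 + p) = 0" by (simp add: p_def)
    with rep show False by simp
  qed
  then have nz: "norm (1 + p) > 0" by (simp add: p_def)
  have "(norm (1 + p))^2 = (norm p)^2 + 1 + 2 * Re p"
    by (simp only: cmod_power2) (simp add: power2_eq_square algebra_simps)
  then have "(norm p)^2 < (norm (1 + p))^2" using rep by linarith
  then have "norm p < norm (1 + p)" by (rule power_less_imp_less_base) simp
  then show "norm (eta_meas M z) < 1"
    using nz by (simp add: eta_meas_def p_def[symmetric] norm_divide)
qed

lemma conv_rad: "fps_conv_radius (psi_fps (moments M)) \<ge> 1"
  unfolding fps_conv_radius_def
proof (rule conv_radius_geI_ex')
  fix r :: real assume r: "0 < r" "ereal r < 1"
  then have "norm (of_real r :: complex) < 1" by simp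
  from sums_summable[OF psi_sums(1)[OF this]]
  show "summable (\<lambda>n. fps_nth (psi_fps (moments M)) n * of_real r ^ n)" .
qed

lemma eval_eq: "norm z < 1 \<Longrightarrow> eval_fps (psi_fps (moments M)) z = psi_meas M z"
  unfolding eval_fps_def using psi_sums(1) by (simp add: sums_iff)

lemma ball_sub: "ball (0::complex) 1 \<subseteq> eball 0 (fps_conv_radius (psi_fps (moments M)))"
proof
  fix z :: complex assume "z \<in> ball 0 1"
  then have "ereal (norm z) < 1" by simp
  also have "\<dots> \<le> fps_conv_radius (psi_fps (moments M))" by (rule conv_rad)
  finally show "z \<in> eball 0 (fps_conv_radius (psi_fps (moments M)))" by simp
qed

lemma psi_holo: "psi_meas M holomorphic_on ball 0 1"
  by (rule holomorphic_transform[OF holomorphic_on_eval_fps[OF ball_sub]]) (simp add: eval_eq)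

lemma psi_exp: "psi_meas M has_fps_expansion psi_fps (moments M)"
  unfolding has_fps_expansion_def
proof
  have "(0::ereal) < 1" by simp
  also have "\<dots> \<le> fps_conv_radius (psi_fps (moments M))" by (rule conv_rad)
  finally show "fps_conv_radius (psi_fps (moments M)) > 0" .
  have "eventually (\<lambda>z. z \<in> ball (0::complex) 1) (nhds 0)" by (rule eventually_nhds_in_open) simp_all
  then show "eventually (\<lambda>z. eval_fps (psi_fps (moments M)) z = psi_meas M z) (nhds 0)"
    by eventually_elim (simp add: eval_eq)
qed

lemma eta_exp: "eta_meas M has_fps_expansion eta_fps (moments M)"
proof -
  have 1: "(\<lambda>z. 1 + psi_meas M z) has_fps_expansion fps_const 1 + psi_fps (moments M)"
    by (rule has_fps_expansion_add[OF has_fps_expansion_const psi_exp])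
  have "(\<lambda>z. psi_meas M z / (1 + psi_meas M z)) has_fps_expansion psi_fps (moments M) / (fps_const 1 + psi_fps (moments M))"
    by (rule has_fps_expansion_divide'[OF psi_exp 1]) (simp add: psi_fps_def)
  then show ?thesis by (simp add: eta_meas_def[abs_def] eta_fps_def)
qed

lemma eta_holo: "eta_meas M holomorphic_on ball 0 1"
proof -
  have "(\<lambda>z. psi_meas M z / (1 + psi_meas M z)) holomorphic_on ball 0 1"
    by (intro holomorphic_intros psi_holo) (use eta_facts(1) in auto)
  then show ?thesis by (simp add: eta_meas_def[abs_def])
qed

end



lemma eta0: "fps_nth (eta_fps m) 0 = 0"
  by (simp add: eta_fps_def fps_divide_unit psi_fps_def)

lemma ball_image:
  assumes "prob_on_circle N"
  shows "eta_meas N ` ball 0 1 \<subseteq> ball 0 1"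
  using eta_facts(2)[OF assms] by auto

lemma same_exp:
  assumes "f has_fps_expansion F" "g has_fps_expansion F"
    "f holomorphic_on ball 0 1" "g holomorphic_on ball 0 1" "norm (z::complex) < 1"
  shows "f z = g z"
proof -
  have "(\<lambda>x. f x - g x) has_fps_expansion F - F" by (rule has_fps_expansion_diff[OF assms(1,2)])
  then have e: "(\<lambda>x. f x - g x) has_fps_expansion 0" by simp
  have "f z - g z = 0"
    by (rule has_fps_expansion_0_analytic_continuation[OF e, of "ball 0 1"])
       (use assms in \<open>auto intro: holomorphic_intros\<close>)
  then show ?thesis by simp
qed

lemma analytic_part:
  assumes pM1: "prob_on_circle M1" and pN1: "prob_on_circle N1" and pM2: "prob_on_circle M2"
    and pN2: "prob_on_circle N2" and pMC: "prob_on_circle MC" and pNC: "prob_on_circle NC"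
    and E1: "eta_fps (moments MC) = eta_fps (moments M2) * fps_compose (fps_shift 1 (eta_fps (moments M1))) (eta_fps (moments N2))"
    and E2: "eta_fps (moments NC) = fps_compose (eta_fps (moments N1)) (eta_fps (moments N2))"
    and c: "moments M1 1 = c"
    and z: "norm z < 1"
  shows "eta_meas MC z = eta_meas M2 z * (let w = eta_meas N2 z in if w = 0 then c else eta_meas M1 w / w)
       \<and> eta_meas NC z = eta_meas N1 (eta_meas N2 z)"
proof
  have imgN2: "eta_meas N2 ` ball 0 1 \<subseteq> ball 0 1" by (rule ball_image[OF pN2])
  have comp_exp: "(eta_meas N1 \<circ> eta_meas N2) has_fps_expansion fps_compose (eta_fps (moments N1)) (eta_fps (moments N2))"
    by (rule has_fps_expansion_compose[OF eta_exp[OF pN1] eta_exp[OF pN2] eta0])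
  have comp_holo: "(eta_meas N1 \<circ> eta_meas N2) holomorphic_on ball 0 1"
    by (rule holomorphic_on_compose_gen[OF eta_holo[OF pN2] eta_holo[OF pN1] imgN2])
  have "eta_meas NC z = (eta_meas N1 \<circ> eta_meas N2) z"
    by (rule same_exp[OF eta_exp[OF pNC] _ eta_holo[OF pNC] comp_holo z]) (use comp_exp E2 in simp)
  then show "eta_meas NC z = eta_meas N1 (eta_meas N2 z)" by simp

  define h where "h w = (if w = 0 then c else eta_meas M1 w / w)" for w
  define F1 where "F1 = eta_fps (moments M1)"
  have F1c: "fps_nth F1 1 = c" using eta_coeff1[of "moments M1"] c by (simp add: F1_def)
  have hexp: "h has_fps_expansion fps_shift 1 F1"
  proof (cases "F1 = 0")
    case True
    have "eventually (\<lambda>w. eval_fps F1 w = eta_meas M1 w) (nhds 0)"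
      using eta_exp[OF pM1] by (simp add: has_fps_expansion_def F1_def)
    then have "eventually (\<lambda>w. eval_fps 0 w = h w) (nhds 0)"
      by eventually_elim (use True F1c in \<open>simp add: h_def eval_fps_def\<close>)
    then show ?thesis using True by (simp add: has_fps_expansion_def)
  next
    case False
    have sd: "1 \<le> subdegree F1" by (rule subdegree_geI[OF False]) (simp add: F1_def eta0)
    have "(\<lambda>x. if x = 0 then c else eta_meas M1 x / x ^ 1) has_fps_expansion fps_shift 1 F1"
      by (rule has_fps_expansion_shift[OF eta_exp[OF pM1, folded F1_def] sd F1c[symmetric]])
    then show ?thesis unfolding power_one_right h_def[abs_def] .
  qed
  have hholo: "h holomorphic_on ball 0 1"
  proof -
    have a0: "h analytic_on {0}" by (rule has_fps_expansion_imp_analytic_0[OF hexp])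
    have "(\<lambda>w. eta_meas M1 w / w) holomorphic_on (ball 0 1 - {0})"
      by (intro holomorphic_intros holomorphic_on_subset[OF eta_holo[OF pM1]]) auto
    then have "h holomorphic_on (ball 0 1 - {0})"
      by (rule holomorphic_transform) (simp add: h_def)
    then have a1: "h analytic_on (ball 0 1 - {0})" by (subst analytic_on_open) auto
    have "h analytic_on ((ball 0 1 - {0}) \<union> {0})" using a0 a1 by (simp only: analytic_on_Un)
    moreover have "(ball (0::complex) 1 - {0}) \<union> {0} = ball 0 1" by auto
    ultimately show ?thesis by (metis analytic_imp_holomorphic)
  qed
  define R where "R x = eta_meas M2 x * (h \<circ> eta_meas N2) x" for x
  have Rexp: "R has_fps_expansion eta_fps (moments M2) * fps_compose (fps_shift 1 F1) (eta_fps (moments N2))"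
    unfolding R_def[abs_def]
    by (rule has_fps_expansion_mult[OF eta_exp[OF pM2] has_fps_expansion_compose[OF hexp eta_exp[OF pN2] eta0]])
  have Rholo: "R holomorphic_on ball 0 1"
    unfolding R_def[abs_def]
    by (intro holomorphic_on_mult eta_holo[OF pM2] holomorphic_on_compose_gen[OF eta_holo[OF pN2] hholo imgN2])
  have "eta_meas MC z = R z"
    by (rule same_exp[OF eta_exp[OF pMC] _ eta_holo[OF pMC] Rholo z]) (use Rexp E1 in \<open>simp add: F1_def\<close>)
  then show "eta_meas MC z = eta_meas M2 z * (let w = eta_meas N2 z in if w = 0 then c else eta_meas M1 w / w)"
    by (simp add: R_def h_def Let_def)
qed


theorem theorem3p3:
  fixes sm :: "complex \<Rightarrow> 'a::ring_1 \<Rightarrow> 'a"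
    and \<phi> \<psi> :: "'a \<Rightarrow> complex"
    and A1 A2 :: "'a set"
    and X Y :: 'a
  assumes aps: "alg_prob_space sm \<phi> \<psi>"
    and indep: "c_monotone_independent sm \<phi> \<psi> {1::nat, 2} (\<lambda>i. if i = 1 then A1 else A2)"
    and X1: "X - 1 \<in> A1" and Y2: "Y \<in> A2"
  shows
    "eta_fps (distr \<phi> (X * Y)) =
       eta_fps (distr \<phi> Y) * fps_compose (fps_shift 1 (eta_fps (distr \<phi> X))) (eta_fps (distr \<psi> Y))
     \<and> eta_fps (distr \<psi> (X * Y)) = fps_compose (eta_fps (distr \<psi> X)) (eta_fps (distr \<psi> Y))
     \<and> (eta_fps (distr \<psi> Y) = 0 \<longrightarrow>
          eta_fps (distr \<phi> (X * Y)) = fps_const (\<phi> X) * eta_fps (distr \<phi> Y))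
     \<and> (\<forall>M1 N1 M2 N2 MC NC.
          prob_on_circle M1 \<and> prob_on_circle N1 \<and> prob_on_circle M2 \<and> prob_on_circle N2 \<and>
          prob_on_circle MC \<and> prob_on_circle NC \<and>
          moments M1 = distr \<phi> X \<and> moments N1 = distr \<psi> X \<and>
          moments M2 = distr \<phi> Y \<and> moments N2 = distr \<psi> Y \<and>
          moments MC = distr \<phi> (X * Y) \<and> moments NC = distr \<psi> (X * Y) \<longrightarrow>
          (\<forall>z. norm z < 1 \<longrightarrow>
             eta_meas MC z =
               eta_meas M2 z *
                 (let w = eta_meas N2 z in if w = 0 then \<phi> X else eta_meas M1 w / w)
             \<and> eta_meas NC z = eta_meas N1 (eta_meas N2 z)))"
  proof -
  have F: "eta_fps (distr \<phi> (X * Y)) =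
       eta_fps (distr \<phi> Y) * fps_compose (fps_shift 1 (eta_fps (distr \<phi> X))) (eta_fps (distr \<psi> Y))
     \<and> eta_fps (distr \<psi> (X * Y)) = fps_compose (eta_fps (distr \<psi> X)) (eta_fps (distr \<psi> Y))
     \<and> (eta_fps (distr \<psi> Y) = 0 \<longrightarrow>
          eta_fps (distr \<phi> (X * Y)) = fps_const (\<phi> X) * eta_fps (distr \<phi> Y))"
    by (rule fps_part[OF aps indep X1 Y2])
  have G: "\<forall>M1 N1 M2 N2 MC NC.
          prob_on_circle M1 \<and> prob_on_circle N1 \<and> prob_on_circle M2 \<and> prob_on_circle N2 \<and>
          prob_on_circle MC \<and> prob_on_circle NC \<and>
          moments M1 = distr \<phi> X \<and> moments N1 = distr \<psi> X \<and>
          moments M2 = distr \<phi> Y \<and> moments N2 = distr \<psi> Y \<and>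
          moments MC = distr \<phi> (X * Y) \<and> moments NC = distr \<psi> (X * Y) \<longrightarrow>
          (\<forall>z. norm z < 1 \<longrightarrow>
             eta_meas MC z =
               eta_meas M2 z *
                 (let w = eta_meas N2 z in if w = 0 then \<phi> X else eta_meas M1 w / w)
             \<and> eta_meas NC z = eta_meas N1 (eta_meas N2 z))"
  proof (intro allI impI)
    fix M1 N1 M2 N2 MC NC and z :: complex
    assume H: "prob_on_circle M1 \<and> prob_on_circle N1 \<and> prob_on_circle M2 \<and> prob_on_circle N2 \<and>
          prob_on_circle MC \<and> prob_on_circle NC \<and>
          moments M1 = distr \<phi> X \<and> moments N1 = distr \<psi> X \<and>
          moments M2 = distr \<phi> Y \<and> moments N2 = distr \<psi> Y \<and>
          moments MC = distr \<phi> (X * Y) \<and> moments NC = distr \<psi> (X * Y)"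
      and z: "norm z < 1"
    have c: "moments M1 1 = \<phi> X" using H by (simp add: distr_def)
    show "eta_meas MC z =
               eta_meas M2 z *
                 (let w = eta_meas N2 z in if w = 0 then \<phi> X else eta_meas M1 w / w)
             \<and> eta_meas NC z = eta_meas N1 (eta_meas N2 z)"
      by (rule analytic_part[OF _ _ _ _ _ _ _ _ c z]) (use H F in simp_all)
  qed
  show ?thesis using F G by blast
qed

end
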